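(* Let $\mathcal G$ be the game induced by an SG-LCS, let $x\in\{0,1\}$ and $T\subseteq S$, and let $(R_i)$ be the sequence defining $\mathrm{Force}^x(\mathcal G,T)$. Then there exists a finite $j\in\mathbb N$ such that $R_i=R_j$ for all $i\ge j$ (in particular $\mathrm{Force}^x(\mathcal G,T)=R_j$).
   Context: An SG-LCS is a tuple $\mathcal L=(\mathtt S,\mathtt S^0,\mathtt S^1,\mathtt C,\mathtt M,\mathtt T,\lambda,\mathrm{Col})$: $\mathtt S$ is a finite set of control states partitioned into $\mathtt S^0,\mathtt S^1$; $\mathtt C$ a finite set of channels; $\mathtt M$ a finite message alphabet; $\mathtt T$ a finite set of transitions $\mathtt s\xrightarrow{op}\mathtt s'$ with $op$ one of $c!m$ (send $m\in\mathtt M$ on $c\in\mathtt C$), $c?m$ (receive $m$ from $c$), or $\mathtt{nop}$; $0<\lambda<1$ the loss rate; $\mathrm{Col}:\mathtt S\to\{0,\dots,n\}$. The induced game $\mathcal G=(S,S^0,S^1,S^R,\to,P,\mathrm{Col})$ has configurations $S=\mathtt S\times(\mathtt M^* )^{\mathtt C}\times\{0,1\}$, random states $S^R=\mathtt S\times(\mathtt M^* )^{\mathtt C}\times\{0\}$, $S^x=\mathtt S^x\times(\mathtt M^* )^{\mathtt C}\times\{1\}$. Transitions: $(\mathtt s,\mathtt x,1)\to(\mathtt s',\mathtt x',0)$ iff there is $\mathtt s\xrightarrow{op}\mathtt s'$ in $\mathtt T$ with: $\mathtt x'=\mathtt x$ if $op=\mathtt{nop}$; $\mathtt x'=\mathtt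 x[c\mapsto \mathtt x(c)\cdot m]$ if $op=c!m$; $\mathtt x(c)=m\cdot w$ and $\mathtt x'=\mathtt x[c\mapsto w]$ if $op=c?m$; if $(\mathtt s,\mathtt x,1)$ has no such successor, it gets the single transition $(\mathtt s,\mathtt x,1)\to(\mathtt s,\mathtt x,0)$. For words, $u\preceq v$ iff $u$ is obtained by deleting zero or more letters of $v$; extended componentwise to channel contents. Random transitions: $(\mathtt s,\mathtt x,0)\to(\mathtt s,\mathtt x',1)$ for every $\mathtt x'\preceq\mathtt x$, with positive probability (each message lost independently with probability $\lambda$). Write $\mathrm{Pre}(Q)=\{s:\exists s'\in Q,\ s\to s'\}$, $\widetilde{\mathrm{Pre}}(Q)=S\setminus\mathrm{Pre}(S\setminus Q)$. Force sets: for $x\in\{0,1\}$ and $T\subseteq S$ let $R_0=T$, $R_{\alpha+1}=R_\alpha\cup(S^R\cap\mathrm{Pre}(R_\alpha))\cup(S^x\cap\mathrm{Pre}(R_\alpha))\cup(S^{1-x}\cap\widetilde{\mathrm{Pre}}(R_\alpha))$, $R_\lambda=\bigcup_{\alpha<\lambda}R_\alpha$ for limit ordinals $\lambda$; with $\gamma$ the least ordinal such that $R_{\gamma+1}=R_\gamma$, set $\mathrm{Force}^x(\mathcal G,T)=R_\gamma$. *)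

theory Defs
  imports Complex_Main "HOL-Library.Sublist"
begin

datatype ('c, 'm) op = Send 'c 'm | Recv 'c 'm | Nop

record ('s, 'c, 'm) sglcs =
  st   :: "'s set"
  st0  :: "'s set"
  st1  :: "'s set"
  chans :: "'c set"
  msgs :: "'m set"
  trans :: "('s \<times> ('c, 'm) op \<times> 's) set"
  loss :: real
  col  :: "'s \<Rightarrow> nat"
  maxcol :: nat

definition op_ok :: "('s, 'c, 'm) sglcs \<Rightarrow> ('c, 'm) op \<Rightarrow> bool" where
  "op_ok L op = (case op of Send c m \<Rightarrow> c \<in> chans L \<and> m \<in> msgs L
                          | Recv c m \<Rightarrow> c \<in> chans L \<and> m \<in> msgs L
                          | Nop \<Rightarrow> True)"

definition wf_sglcs :: "('s, 'c, 'm) sglcs \<Rightarrow> bool" where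
  "wf_sglcs L \<longleftrightarrow>
     finite (st L) \<and> st0 L \<inter> st1 L = {} \<and> st0 L \<union> st1 L = st L \<and>
     finite (chans L) \<and> finite (msgs L) \<and> finite (trans L) \<and>
     (\<forall>(s, op, s') \<in> trans L. s \<in> st L \<and> s' \<in> st L \<and> op_ok L op) \<and>
     0 < loss L \<and> loss L < 1 \<and>
     (\<forall>s \<in> st L. col L s \<le> maxcol L)"

text \<open>Configurations: control state, channel contents (a word over the message
alphabet for each channel; channels outside \<open>chans L\<close> are fixed to the empty
word), and a bit in {0,1} (0 = random configuration).\<close>

type_synonym ('s, 'c, 'm) conf = "'s \<times> ('c \<Rightarrow> 'm list) \<times> nat"

definition valid_contents :: "('s, 'c, 'm) sglcs \<Rightarrow> ('c \<Rightarrow> 'm list) \<Rightarrow> bool" where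
  "valid_contents L x \<longleftrightarrow> (\<forall>c. (c \<in> chans L \<longrightarrow> set (x c) \<subseteq> msgs L) \<and> (c \<notin> chans L \<longrightarrow> x c = []))"

definition confs :: "('s, 'c, 'm) sglcs \<Rightarrow> ('s, 'c, 'm) conf set" where
  "confs L = {(s, x, b). s \<in> st L \<and> valid_contents L x \<and> b \<in> {0, 1}}"

definition rand_confs :: "('s, 'c, 'm) sglcs \<Rightarrow> ('s, 'c, 'm) conf set" where
  "rand_confs L = {(s, x, b). s \<in> st L \<and> valid_contents L x \<and> b = 0}"

definition player_confs :: "('s, 'c, 'm) sglcs \<Rightarrow> nat \<Rightarrow> ('s, 'c, 'm) conf set" where
  "player_confs L p = {(s, x, b). s \<in> (if p = 0 then st0 L else st1 L) \<and> valid_contents L x \<and> b = 1}"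

definition op_step :: "('c, 'm) op \<Rightarrow> ('c \<Rightarrow> 'm list) \<Rightarrow> ('c \<Rightarrow> 'm list) \<Rightarrow> bool" where
  "op_step op x x' = (case op of
      Nop \<Rightarrow> x' = x
    | Send c m \<Rightarrow> x' = x(c := x c @ [m])
    | Recv c m \<Rightarrow> (\<exists>w. x c = m # w \<and> x' = x(c := w)))"

definition sub_contents :: "('c \<Rightarrow> 'm list) \<Rightarrow> ('c \<Rightarrow> 'm list) \<Rightarrow> bool" where
  "sub_contents x' x \<longleftrightarrow> (\<forall>c. subseq (x' c) (x c))"

definition ctrl_succ :: "('s, 'c, 'm) sglcs \<Rightarrow> 's \<Rightarrow> ('c \<Rightarrow> 'm list) \<Rightarrow> 's \<Rightarrow> ('c \<Rightarrow> 'm list) \<Rightarrow> bool" where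
  "ctrl_succ L s x s' x' \<longleftrightarrow> (\<exists>op. (s, op, s') \<in> trans L \<and> op_step op x x')"

definition edge :: "('s, 'c, 'm) sglcs \<Rightarrow> ('s, 'c, 'm) conf \<Rightarrow> ('s, 'c, 'm) conf \<Rightarrow> bool" where
  "edge L u v \<longleftrightarrow> u \<in> confs L \<and> v \<in> confs L \<and>
     (case (u, v) of ((s, x, b), (s', x', b')) \<Rightarrow>
        (b = 1 \<and> b' = 0 \<and>
           (ctrl_succ L s x s' x' \<or>
            ((\<nexists>s'' x''. ctrl_succ L s x s'' x'') \<and> s' = s \<and> x' = x)))
      \<or> (b = 0 \<and> b' = 1 \<and> s' = s \<and> sub_contents x' x))"

definition Pre :: "('s, 'c, 'm) sglcs \<Rightarrow> ('s, 'c, 'm) conf set \<Rightarrow> ('s, 'c, 'm) conf set" where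
  "Pre L Q = {u \<in> confs L. \<exists>v \<in> Q. edge L u v}"

definition tPre :: "('s, 'c, 'm) sglcs \<Rightarrow> ('s, 'c, 'm) conf set \<Rightarrow> ('s, 'c, 'm) conf set" where
  "tPre L Q = confs L - Pre L (confs L - Q)"

definition force_step :: "('s, 'c, 'm) sglcs \<Rightarrow> nat \<Rightarrow> ('s, 'c, 'm) conf set \<Rightarrow> ('s, 'c, 'm) conf set" where
  "force_step L p R = R \<union> (rand_confs L \<inter> Pre L R) \<union> (player_confs L p \<inter> Pre L R)
                         \<union> (player_confs L (1 - p) \<inter> tPre L R)"

definition force_seq :: "('s, 'c, 'm) sglcs \<Rightarrow> nat \<Rightarrow> ('s, 'c, 'm) conf set \<Rightarrow> nat \<Rightarrow> ('s, 'c, 'm) conf set" where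
  "force_seq L p T i = (force_step L p ^^ i) T"

text \<open>The force set: the limit of the (transfinite, inflationary, monotone) iteration,
i.e. the least set containing \<open>T\<close> and closed under \<open>force_step\<close>.\<close>
definition Force :: "('s, 'c, 'm) sglcs \<Rightarrow> nat \<Rightarrow> ('s, 'c, 'm) conf set \<Rightarrow> ('s, 'c, 'm) conf set" where
  "Force L p T = \<Inter>{R. T \<subseteq> R \<and> force_step L p R \<subseteq> R}"

end

theory Submission
  imports Defs "HOL-Library.Infinite_Set" "HOL-Library.Ramsey"
begin

lemma pigeon_seq:
  fixes g :: "nat \<Rightarrow> 'b"
  assumes "\<forall>i. g i \<in> S" "finite S"
  shows "\<exists>r::nat\<Rightarrow>nat. strict_mono r \<and> (\<forall>i. g (r i) = g (r 0))"
proof -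
  have "(UNIV::nat set) = (\<Union>a\<in>S. {i. g i = a})" using assms(1) by auto
  then have "\<exists>a\<in>S. infinite {i. g i = a}"
  proof -
    assume eq: "(UNIV::nat set) = (\<Union>a\<in>S. {i. g i = a})"
    show ?thesis
    proof (rule ccontr)
      assume "\<not> ?thesis"
      then have "finite (\<Union>a\<in>S. {i. g i = a})" using assms(2) by auto
      then show False using eq infinite_UNIV_nat by simp
    qed
  qed
  then obtain a where a: "infinite {i. g i = a}" by blast
  define r where "r = enumerate {i. g i = a}"
  have "strict_mono r" unfolding r_def using strict_mono_enumerate[OF a] .
  moreover have "\<forall>i. g (r i) = a" unfolding r_def using enumerate_in_set[OF a] by auto
  ultimately show ?thesis by metis
qed

lemma set_tl_sub: "set (tl xs) \<subseteq> set xs" by (cases xs) auto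

definition bad_seq :: "(nat \<Rightarrow> 'a list) \<Rightarrow> bool" where
  "bad_seq f \<longleftrightarrow> (\<forall>i j. i < j \<longrightarrow> \<not> subseq (f i) (f j))"

definition hext :: "'a set \<Rightarrow> 'a list list \<Rightarrow> bool" where
  "hext A ws \<longleftrightarrow> (\<exists>f. (\<forall>i. set (f i) \<subseteq> A) \<and> bad_seq f \<and> (\<forall>i<length ws. f i = ws ! i))"

definition minext :: "'a set \<Rightarrow> 'a list list \<Rightarrow> 'a list" where
  "minext A ws = (SOME w. hext A (ws@[w]) \<and> (\<forall>v. hext A (ws@[v]) \<longrightarrow> length w \<le> length v))"

fun pre :: "'a set \<Rightarrow> nat \<Rightarrow> 'a list list" where
  "pre A 0 = []"
| "pre A (Suc n) = pre A n @ [minext A (pre A n)]"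

lemma minext_ok:
  assumes "hext A ws"
  shows "hext A (ws @ [minext A ws]) \<and> (\<forall>v. hext A (ws@[v]) \<longrightarrow> length (minext A ws) \<le> length v)"
proof -
  from assms obtain f where f: "\<forall>i. set (f i) \<subseteq> A" "bad_seq f" "\<forall>i<length ws. f i = ws ! i"
    unfolding hext_def by blast
  have "hext A (ws @ [f (length ws)])" unfolding hext_def
    using f by (intro exI[of _ f]) (auto simp: nth_append less_Suc_eq)
  then have ex: "\<exists>n. \<exists>w. length w = n \<and> hext A (ws@[w])" by blast
  define n0 where "n0 = (LEAST n. \<exists>w. length w = n \<and> hext A (ws@[w]))"
  obtain w0 where w0: "length w0 = n0" "hext A (ws@[w0])"
    using LeastI_ex[OF ex] unfolding n0_def by blast
  have "\<forall>v. hext A (ws@[v]) \<longrightarrow> length w0 \<le> length v"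
  proof (intro allI impI)
    fix v assume h: "hext A (ws@[v])"
    have "n0 \<le> length v" unfolding n0_def by (rule Least_le) (use h in blast)
    then show "length w0 \<le> length v" using w0(1) by simp
  qed
  then have "\<exists>w. hext A (ws@[w]) \<and> (\<forall>v. hext A (ws@[v]) \<longrightarrow> length w \<le> length v)"
    using w0 by blast
  then show ?thesis unfolding minext_def by (rule someI_ex)
qed

lemma pre_props: "hext A [] \<Longrightarrow> hext A (pre A n) \<and> length (pre A n) = n"
  by (induction n) (auto dest: minext_ok)

lemma pre_nth: "i < n \<Longrightarrow> pre A n ! i = minext A (pre A i)"
proof (induction n)
  case 0 then show ?case by simp
next
  case (Suc n)
  have l: "length (pre A k) = k" for k by (induction k) auto
  show ?case
  proof (cases "i < n")
    case True then show ?thesis using Suc by (simp add: nth_append l)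
  next
    case False then have "i = n" using Suc by simp
    then show ?thesis by (simp add: nth_append l)
  qed
qed

theorem higman_fin:
  fixes f :: "nat \<Rightarrow> 'a list"
  assumes "finite A" "\<forall>i. set (f i) \<subseteq> A"
  shows "\<exists>i j. i < j \<and> subseq (f i) (f j)"
proof (rule ccontr)
  assume "\<not> ?thesis"
  then have h0: "hext A []" unfolding hext_def bad_seq_def using assms(2) by (intro exI[of _ f]) auto
  define m where "m i = minext A (pre A i)" for i
  have mA: "set (m i) \<subseteq> A" and mbad: "\<And>j. i < j \<Longrightarrow> \<not> subseq (m i) (m j)" for i
  proof -
    fix j assume ij: "i < j"
    obtain g where g: "\<forall>i. set (g i) \<subseteq> A" "bad_seq g" "\<forall>l<length (pre A (Suc j)). g l = pre A (Suc j) ! l"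
      using pre_props[OF h0, of "Suc j"] unfolding hext_def by blast
    have "g i = m i" "g j = m j" using g(3) pre_nth[of _ "Suc j" A] pre_props[OF h0, of "Suc j"] ij
      unfolding m_def by auto
    then show "\<not> subseq (m i) (m j)" using g(2) ij unfolding bad_seq_def by (metis (no_types))
  next
    obtain g where g: "\<forall>i. set (g i) \<subseteq> A" "bad_seq g" "\<forall>l<length (pre A (Suc i)). g l = pre A (Suc i) ! l"
      using pre_props[OF h0, of "Suc i"] unfolding hext_def by blast
    have "g i = m i" using g(3) pre_nth[of _ "Suc i" A] pre_props[OF h0, of "Suc i"]
      unfolding m_def by auto
    then show "set (m i) \<subseteq> A" using g(1) by (metis (no_types))
  qed
  have mmin: "hext A (pre A n @ [v]) \<Longrightarrow> length (m n) \<le> length v" for n v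
    using minext_ok[OF conjunct1[OF pre_props[OF h0, of n]]] unfolding m_def by blast
  have mne: "m i \<noteq> []" for i using mbad[of i "Suc i"] by auto
  have "\<forall>i. hd (m i) \<in> A" using mA mne by (meson hd_in_set subsetD)
  then obtain r :: "nat \<Rightarrow> nat" where r: "strict_mono r" "\<forall>i. hd (m (r i)) = hd (m (r 0))"
    using pigeon_seq[OF _ assms(1), of "\<lambda>i. hd (m i)"] by blast
  define r0 where "r0 = r 0"
  define g where "g j = (if j < r0 then m j else tl (m (r (j - r0))))" for j
  have gA: "\<forall>i. set (g i) \<subseteq> A"
  proof
    fix i
    show "set (g i) \<subseteq> A"
      using mA[of i] mA[of "r (i - r0)"] set_tl_sub[of "m (r (i - r0))"] unfolding g_def by auto
  qed
  have gbad: "bad_seq g" unfolding bad_seq_def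
  proof (intro allI impI)
    fix i j :: nat assume ij: "i < j"
    show "\<not> subseq (g i) (g j)"
    proof (cases "j < r0")
      case True then show ?thesis using ij mbad unfolding g_def by auto
    next
      case jF: False
      show ?thesis
      proof (cases "i < r0")
        case True
        have "r0 \<le> r (j - r0)" unfolding r0_def using r(1) by (simp add: strict_mono_less_eq)
        then have lt: "i < r (j - r0)" using True by simp
        show ?thesis
        proof
          assume "subseq (g i) (g j)"
          then have "subseq (m i) (tl (m (r (j - r0))))" unfolding g_def using True jF by simp
          then have "subseq (m i) (hd (m (r (j - r0))) # tl (m (r (j - r0))))" by blast
          then have "subseq (m i) (m (r (j - r0)))" using mne by simp
          then show False using mbad[OF lt] by simp
        qed
      next
        case False
        have lt: "r (i - r0) < r (j - r0)" using r(1) False ij jF by (simp add: strict_mono_less)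
        show ?thesis
        proof
          assume "subseq (g i) (g j)"
          then have "subseq (tl (m (r (i - r0)))) (tl (m (r (j - r0))))" unfolding g_def using False jF by simp
          then have "subseq (hd (m (r (i - r0))) # tl (m (r (i - r0)))) (hd (m (r (j - r0))) # tl (m (r (j - r0))))"
            using r(2) by (intro list_emb_Cons2) metis+
          then have "subseq (m (r (i - r0))) (m (r (j - r0)))" using mne by simp
          then show False using mbad[OF lt] by simp
        qed
      qed
    qed
  qed
  have lp: "length (pre A r0) = r0" using pre_props[OF h0] by simp
  have "hext A (pre A r0 @ [tl (m r0)])" unfolding hext_def
  proof (intro exI[of _ g] conjI gA gbad allI impI)
    fix l assume "l < length (pre A r0 @ [tl (m r0)])"
    then have "l < r0 \<or> l = r0" using lp by auto
    then show "g l = (pre A r0 @ [tl (m r0)]) ! l"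
      using pre_nth[of l r0 A] lp unfolding g_def m_def r0_def by (auto simp: nth_append)
  qed
  from mmin[OF this] mne[of r0] show False by (cases "m r0") auto
qed

lemma word_asc:
  fixes f :: "nat \<Rightarrow> 'a list"
  assumes "finite A" "\<forall>i. set (f i) \<subseteq> A"
  shows "\<exists>r::nat\<Rightarrow>nat. strict_mono r \<and> (\<forall>i j. i < j \<longrightarrow> subseq (f (r i)) (f (r j)))"
proof -
  define col where "col X = (if subseq (f (Min X)) (f (Max X)) then 0 else (1::nat))" for X :: "nat set"
  have "\<forall>x\<in>(UNIV::nat set). \<forall>y\<in>UNIV. x \<noteq> y \<longrightarrow> col {x, y} < 2" unfolding col_def by auto
  from Ramsey2[OF infinite_UNIV_nat this] obtain Y t where
    Y: "infinite Y" "t < 2" "\<forall>x\<in>Y. \<forall>y\<in>Y. x \<noteq> y \<longrightarrow> col {x, y} = t" by blast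
  define r where "r = enumerate Y"
  have rm: "strict_mono r" unfolding r_def using strict_mono_enumerate[OF Y(1)] .
  have rY: "r i \<in> Y" for i unfolding r_def using enumerate_in_set[OF Y(1)] .
  have colr: "i < j \<Longrightarrow> col {r i, r j} = t" for i j
    using Y(3) rY rm by (metis less_irrefl strict_mono_less)
  have colr2: "i < j \<Longrightarrow> col {r i, r j} = (if subseq (f (r i)) (f (r j)) then 0 else 1)" for i j
  proof -
    assume "i < j" then have "r i < r j" using rm by (simp add: strict_mono_less)
    then show ?thesis unfolding col_def by (simp add: min_def max_def)
  qed
  obtain i j where ij: "i < j" "subseq (f (r i)) (f (r j))"
    using higman_fin[OF assms(1), of "\<lambda>i. f (r i)"] assms(2) by blast
  have "t = 0" using colr[OF ij(1)] colr2[OF ij(1)] ij(2) by simp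
  then have "\<forall>i j. i < j \<longrightarrow> subseq (f (r i)) (f (r j))"
    using colr colr2 by (metis zero_neq_one)
  then show ?thesis using rm by blast
qed

lemma chan_asc:
  fixes x :: "nat \<Rightarrow> 'c \<Rightarrow> 'a list"
  assumes "finite C" "finite A" "\<forall>i. \<forall>c\<in>C. set (x i c) \<subseteq> A"
  shows "\<exists>r::nat\<Rightarrow>nat. strict_mono r \<and> (\<forall>i j. i < j \<longrightarrow> (\<forall>c\<in>C. subseq (x (r i) c) (x (r j) c)))"
  using assms(1,3)
proof (induction C rule: finite_induct)
  case empty
  then show ?case by (intro exI[of _ id]) (auto simp: strict_mono_def)
next
  case (insert c C)
  then obtain r1 :: "nat \<Rightarrow> nat" where r1: "strict_mono r1"
    "\<forall>i j. i < j \<longrightarrow> (\<forall>c\<in>C. subseq (x (r1 i) c) (x (r1 j) c))" by auto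
  obtain r2 :: "nat \<Rightarrow> nat" where r2: "strict_mono r2"
    "\<forall>i j. i < j \<longrightarrow> subseq (x (r1 (r2 i)) c) (x (r1 (r2 j)) c)"
    using word_asc[OF assms(2), of "\<lambda>i. x (r1 i) c"] insert.prems by auto
  have "strict_mono (r1 \<circ> r2)" using r1(1) r2(1) by (simp add: strict_mono_def)
  moreover have "\<forall>i j. i < j \<longrightarrow> (\<forall>c'\<in>insert c C. subseq (x ((r1 \<circ> r2) i) c') (x ((r1 \<circ> r2) j) c'))"
    using r1(2) r2 by (auto simp: strict_mono_less)
  ultimately show ?case by blast
qed

lemma conf_good:
  fixes a :: "nat \<Rightarrow> ('s, 'c, 'm) conf"
  assumes wf: "wf_sglcs L" and a: "\<forall>i. a i \<in> rand_confs L"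
  shows "\<exists>i j. i < j \<and> fst (a i) = fst (a j) \<and> sub_contents (fst (snd (a i))) (fst (snd (a j)))"
proof -
  have fin: "finite (st L)" "finite (chans L)" "finite (msgs L)" using wf unfolding wf_sglcs_def by auto
  have ast: "\<forall>i. fst (a i) \<in> st L" and aval: "\<forall>i. valid_contents L (fst (snd (a i)))"
    using a unfolding rand_confs_def by (auto simp: mem_Times_iff)
  obtain r0 :: "nat \<Rightarrow> nat" where r0: "strict_mono r0" "\<forall>i. fst (a (r0 i)) = fst (a (r0 0))"
    using pigeon_seq[OF _ fin(1), of "\<lambda>i. fst (a i)"] ast by blast
  have "\<forall>i. \<forall>c\<in>chans L. set (fst (snd (a (r0 i))) c) \<subseteq> msgs L"
    using aval unfolding valid_contents_def by auto
  then obtain r :: "nat \<Rightarrow> nat" where r: "strict_mono r"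
    "\<forall>i j. i < j \<longrightarrow> (\<forall>c\<in>chans L. subseq (fst (snd (a (r0 (r i)))) c) (fst (snd (a (r0 (r j)))) c))"
    using chan_asc[OF fin(2) fin(3), of "\<lambda>i. fst (snd (a (r0 i)))"] by blast
  have "r0 (r 0) < r0 (r 1)" using r0(1) r(1) by (simp add: strict_mono_less)
  moreover have "fst (a (r0 (r 0))) = fst (a (r0 (r 1)))" using r0(2) by metis
  moreover have "sub_contents (fst (snd (a (r0 (r 0))))) (fst (snd (a (r0 (r 1)))))"
    unfolding sub_contents_def
  proof
    fix c
    show "subseq (fst (snd (a (r0 (r 0)))) c) (fst (snd (a (r0 (r 1)))) c)"
    proof (cases "c \<in> chans L")
      case True then show ?thesis using r(2) by auto
    next
      case False then show ?thesis using aval unfolding valid_contents_def by simp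
    qed
  qed
  ultimately show ?thesis by blast
qed

lemma Pre_mono: "A \<subseteq> B \<Longrightarrow> Pre L A \<subseteq> Pre L B"
  unfolding Pre_def by blast

lemma tPre_mono: "A \<subseteq> B \<Longrightarrow> tPre L A \<subseteq> tPre L B"
  unfolding tPre_def Pre_def by blast

lemma force_step_mono: "A \<subseteq> B \<Longrightarrow> force_step L p A \<subseteq> force_step L p B"
  unfolding force_step_def using Pre_mono tPre_mono by blast

lemma player_edge_rand:
  assumes "u \<in> player_confs L q" "edge L u v"
  shows "v \<in> rand_confs L"
  using assms unfolding player_confs_def rand_confs_def edge_def confs_def
  by (auto split: prod.splits)

lemma rand_sub_confs: "rand_confs L \<subseteq> confs L"
  unfolding rand_confs_def confs_def by auto

lemma player_dep:
  assumes "R \<inter> rand_confs L = R' \<inter> rand_confs L"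
  shows "player_confs L q \<inter> Pre L R = player_confs L q \<inter> Pre L R'"
    and "player_confs L q \<inter> tPre L R = player_confs L q \<inter> tPre L R'"
proof -
  have k: "u \<in> player_confs L q \<Longrightarrow> edge L u v \<Longrightarrow> (v \<in> R \<longleftrightarrow> v \<in> R')" for u v
    using player_edge_rand[of u L q v] assms by blast
  show "player_confs L q \<inter> Pre L R = player_confs L q \<inter> Pre L R'"
    unfolding Pre_def using k by blast
  show "player_confs L q \<inter> tPre L R = player_confs L q \<inter> tPre L R'"
    unfolding tPre_def Pre_def using k by blast
qed

lemma player_rand_disj: "player_confs L q \<inter> rand_confs L = {}"
  unfolding player_confs_def rand_confs_def by auto

theorem mainTheorem11:
  fixes L :: "('s, 'c, 'm) sglcs" and p :: nat and T :: "('s, 'c, 'm) conf set"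
  assumes "wf_sglcs L" and "p \<in> {0, 1}" and "T \<subseteq> confs L"
  shows "\<exists>j::nat. (\<forall>i\<ge>j. force_seq L p T i = force_seq L p T j) \<and> Force L p T = force_seq L p T j"
proof -
  define R where "R i = force_seq L p T i" for i
  have R0: "R 0 = T" unfolding R_def force_seq_def by simp
  have Rsuc: "R (Suc i) = force_step L p (R i)" for i unfolding R_def force_seq_def by simp
  have Rinc: "R i \<subseteq> R (Suc i)" for i unfolding Rsuc force_step_def by blast
  have Rmono: "i \<le> j \<Longrightarrow> R i \<subseteq> R j" for i j using lift_Suc_mono_le[of R, OF Rinc] by blast
  define U where "U i = rand_confs L \<inter> Pre L (R i)" for i
  have Umono: "i \<le> j \<Longrightarrow> U i \<subseteq> U j" for i j unfolding U_def using Rmono Pre_mono by blast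
  have Uup: "(s, y, 0) \<in> U i" if "(s, x, 0) \<in> U i" "(s, y, 0) \<in> rand_confs L" "sub_contents x y"
    for s x y i
  proof -
    from that(1) obtain v where v: "v \<in> R i" "edge L (s, x, 0) v" unfolding U_def Pre_def by blast
    obtain s' x' b' where vv: "v = (s', x', b')" by (cases v)
    have e: "v \<in> confs L" "b' = 1" "s' = s" "sub_contents x' x"
      using v(2) unfolding vv edge_def by auto
    have "sub_contents x' y" using e(4) that(3) unfolding sub_contents_def
      using subseq_order.order_trans by blast
    then have "edge L (s, y, 0) v" using e that(2) rand_sub_confs unfolding edge_def vv by auto
    then show ?thesis using v(1) that(2) rand_sub_confs unfolding U_def Pre_def by blast
  qed
  have Ustab: "\<exists>k. \<forall>i\<ge>k. U i = U k"
  proof (rule ccontr)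
    assume "\<not> ?thesis"
    then have ex: "\<forall>k. \<exists>i. i \<ge> k \<and> U i \<noteq> U k" by blast
    define nx where "nx k = (SOME i. i \<ge> k \<and> U i \<noteq> U k)" for k
    have nx: "nx k \<ge> k \<and> U (nx k) \<noteq> U k" for k unfolding nx_def using someI_ex[OF ex[rule_format, of k]] .
    define n where "n j = (nx ^^ j) 0" for j
    have nsuc: "n (Suc j) = nx (n j)" for j unfolding n_def by simp
    have nle: "n j \<le> n (Suc j)" for j using nx nsuc by simp
    have nmono: "i \<le> j \<Longrightarrow> n i \<le> n j" for i j using lift_Suc_mono_le[of n, OF nle] by blast
    have exa: "\<exists>b. b \<in> U (n (Suc j)) - U (n j)" for j
      using nx[of "n j"] Umono[of "n j" "n (Suc j)"] nle nsuc by auto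
    define a where "a j = (SOME b. b \<in> U (n (Suc j)) - U (n j))" for j
    have a: "a j \<in> U (n (Suc j)) - U (n j)" for j unfolding a_def using someI_ex[OF exa] .
    have arand: "\<forall>j. a j \<in> rand_confs L" using a unfolding U_def by blast
    obtain i j where ij: "i < j" "fst (a i) = fst (a j)" "sub_contents (fst (snd (a i))) (fst (snd (a j)))"
      using conf_good[OF assms(1) arand] by blast
    have "a i \<in> U (n j)" using a[of i] Umono[OF nmono[of "Suc i" j]] ij(1) by auto
    moreover have "snd (snd (a i)) = 0" "snd (snd (a j)) = 0" using arand unfolding rand_confs_def by (auto simp: mem_Times_iff)
    ultimately have "a j \<in> U (n j)"
      using Uup[of "fst (a i)" "fst (snd (a i))" "n j" "fst (snd (a j))"] ij(2,3) arand
      by (metis prod.collapse)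
    then show False using a[of j] by blast
  qed
  then obtain k where k: "\<forall>i\<ge>k. U i = U k" by blast
  have Rrand: "R (Suc j) \<inter> rand_confs L = (R j \<inter> rand_confs L) \<union> U j" for j
  proof -
    have d1: "player_confs L p \<inter> Pre L (R j) \<inter> rand_confs L = {}"
      using player_rand_disj[of L p] by blast
    have d2: "player_confs L (1 - p) \<inter> tPre L (R j) \<inter> rand_confs L = {}"
      using player_rand_disj[of L "1 - p"] by blast
    have e: "R (Suc j) \<inter> rand_confs L = (R j \<inter> rand_confs L) \<union> (rand_confs L \<inter> Pre L (R j) \<inter> rand_confs L)
       \<union> (player_confs L p \<inter> Pre L (R j) \<inter> rand_confs L) \<union> (player_confs L (1 - p) \<inter> tPre L (R j) \<inter> rand_confs L)"
      unfolding Rsuc force_step_def by (simp only: Int_Un_distrib2)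
    show ?thesis unfolding e d1 d2 U_def by blast
  qed
  have Rrand_stab: "R (Suc j) \<inter> rand_confs L = R j \<inter> rand_confs L" if jk: "j \<ge> Suc k" for j
  proof -
    obtain j' where j': "j = Suc j'" "j' \<ge> k" using jk by (cases j) auto
    have "U j = U k" by (rule k[rule_format]) (use j' in simp)
    have "U j' = U k" by (rule k[rule_format]) (use j' in simp)
    have uu: "U j = U j'" using \<open>U j = U k\<close> \<open>U j' = U k\<close> by simp
    have a1: "R (Suc j) \<inter> rand_confs L = (R j \<inter> rand_confs L) \<union> U j" by (rule Rrand)
    have a2: "R j \<inter> rand_confs L = (R j' \<inter> rand_confs L) \<union> U j'" using Rrand[of j'] j'(1) by simp
    show ?thesis unfolding a1 a2 uu by blast
  qed
  have stepstab: "R (Suc (Suc j)) = R (Suc j)" if "j \<ge> Suc k" for j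
  proof -
    have eq: "R (Suc j) \<inter> rand_confs L = R j \<inter> rand_confs L" using Rrand_stab[OF that] .
    have u1: "U (Suc j) = U k" by (rule k[rule_format]) (use that in simp)
    have u2: "U j = U k" by (rule k[rule_format]) (use that in simp)
    have "U (Suc j) = U j" using u1 u2 by simp
    have Uj: "U j \<subseteq> R (Suc j)" unfolding U_def Rsuc[of j] force_step_def by blast
    have Pj: "player_confs L p \<inter> Pre L (R j) \<subseteq> R (Suc j)" unfolding Rsuc[of j] force_step_def by blast
    have tPj: "player_confs L (1 - p) \<inter> tPre L (R j) \<subseteq> R (Suc j)" unfolding Rsuc[of j] force_step_def by blast
    have 1: "rand_confs L \<inter> Pre L (R (Suc j)) \<subseteq> R (Suc j)"
      using \<open>U (Suc j) = U j\<close> Uj unfolding U_def by simp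
    have 2: "player_confs L p \<inter> Pre L (R (Suc j)) \<subseteq> R (Suc j)"
      using player_dep(1)[OF eq, of p] Pj by simp
    have 3: "player_confs L (1 - p) \<inter> tPre L (R (Suc j)) \<subseteq> R (Suc j)"
      using player_dep(2)[OF eq, of "1 - p"] tPj by simp
    have "force_step L p (R (Suc j)) \<subseteq> R (Suc j)"
      using 1 2 3 unfolding force_step_def[of L p "R (Suc j)"] by (intro Un_least) auto
    moreover have "R (Suc j) \<subseteq> force_step L p (R (Suc j))" using Rinc[of "Suc j"] Rsuc[of "Suc j"] by simp
    ultimately show ?thesis using Rsuc[of "Suc j"] by simp
  qed
  define J where "J = Suc (Suc k)"
  have stab: "\<forall>i\<ge>J. R i = R J"
  proof (intro allI impI)
    fix i assume "J \<le> i"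
    then show "R i = R J"
    proof (induction i rule: dec_induct)
      case base then show ?case by simp
    next
      case (step m)
      obtain m' where "m = Suc m'" "m' \<ge> Suc k" using step(1) unfolding J_def by (cases m) auto
      then have "R (Suc m) = R m" using stepstab[of m'] by simp
      then show ?case using step(3) by simp
    qed
  qed
  have "R (Suc J) = R J" by (rule stab[rule_format]) simp
  then have fixR: "force_step L p (R J) = R J" using Rsuc[of J] by simp
  have "Force L p T = R J"
  proof
    show "Force L p T \<subseteq> R J" unfolding Force_def using fixR R0 Rmono[of 0 J] by blast
  next
    have "R i \<subseteq> R'" if "T \<subseteq> R'" "force_step L p R' \<subseteq> R'" for R' i
    proof (induction i)
      case 0 then show ?case using R0 that by simp
    next
      case (Suc i) then show ?case unfolding Rsuc using force_step_mono that(2) by blast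
    qed
    then show "R J \<subseteq> Force L p T" unfolding Force_def by blast
  qed
  then show ?thesis using stab unfolding R_def by blast
qed

end
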